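(* Let $m\geq 2$ and $2\leq n\leq m+1$ be integers, let $T_n$ be any tree with $n$ vertices and let $\overline{K_m}$ be the edgeless graph on $m$ vertices. Then $\chi_L(T_n\odot\overline{K_m})=m+1$.
   Context: All graphs are finite and simple. A $k$-coloring of a connected graph $G$ is a map $c:V(G)\to\{1,\dots,k\}$ with $c(u)\neq c(v)$ for adjacent $u,v$; it induces the partition $\Pi=\{C_1,\dots,C_k\}$ into color classes $C_i=c^{-1}(i)$. The color code of $v$ is $c_\Pi(v)=(d(v,C_1),\dots,d(v,C_k))$ with $d(v,C_i)=\min\{d(v,x): x\in C_i\}$ (graph distance). $c$ is a locating coloring if distinct vertices have distinct color codes; the locating-chromatic number $\chi_L(G)$ is the least $k$ for which a locating $k$-coloring exists. The corona product $G\odot H$ of a graph $G$ with vertex set $\{a_1,\dots,a_n\}$ and a graph $H$ is obtained from one copy of $G$ and $n$ disjoint copies of $H$ by joining $a_i$ to every vertex of the $i$-th copy of $H$. *)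

theory Defs
  imports Main
begin

definition simple_graph :: "'a set \<Rightarrow> ('a \<Rightarrow> 'a \<Rightarrow> bool) \<Rightarrow> bool" where
  "simple_graph V E \<longleftrightarrow> finite V \<and> (\<forall>u v. E u v \<longrightarrow> u \<in> V \<and> v \<in> V)
     \<and> (\<forall>u v. E u v \<longrightarrow> E v u) \<and> (\<forall>u. \<not> E u u)"

definition is_walk :: "'a set \<Rightarrow> ('a \<Rightarrow> 'a \<Rightarrow> bool) \<Rightarrow> 'a list \<Rightarrow> bool" where
  "is_walk V E xs \<longleftrightarrow> xs \<noteq> [] \<and> set xs \<subseteq> V \<and> (\<forall>i. Suc i < length xs \<longrightarrow> E (xs ! i) (xs ! Suc i))"

definition connected_graph :: "'a set \<Rightarrow> ('a \<Rightarrow> 'a \<Rightarrow> bool) \<Rightarrow> bool" where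
  "connected_graph V E \<longleftrightarrow> V \<noteq> {} \<and>
     (\<forall>u\<in>V. \<forall>v\<in>V. \<exists>xs. is_walk V E xs \<and> hd xs = u \<and> last xs = v)"

definition has_cycle :: "'a set \<Rightarrow> ('a \<Rightarrow> 'a \<Rightarrow> bool) \<Rightarrow> bool" where
  "has_cycle V E \<longleftrightarrow> (\<exists>xs. length xs \<ge> 3 \<and> distinct xs \<and> is_walk V E xs \<and> E (last xs) (hd xs))"

definition is_tree :: "'a set \<Rightarrow> ('a \<Rightarrow> 'a \<Rightarrow> bool) \<Rightarrow> bool" where
  "is_tree V E \<longleftrightarrow> simple_graph V E \<and> connected_graph V E \<and> \<not> has_cycle V E"

definition gdist :: "'a set \<Rightarrow> ('a \<Rightarrow> 'a \<Rightarrow> bool) \<Rightarrow> 'a \<Rightarrow> 'a \<Rightarrow> nat" where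
  "gdist V E u v = (LEAST k. \<exists>xs. is_walk V E xs \<and> hd xs = u \<and> last xs = v \<and> length xs = Suc k)"

definition setdist :: "'a set \<Rightarrow> ('a \<Rightarrow> 'a \<Rightarrow> bool) \<Rightarrow> 'a \<Rightarrow> 'a set \<Rightarrow> nat" where
  "setdist V E v C = Min (gdist V E v ` C)"

definition is_coloring :: "'a set \<Rightarrow> ('a \<Rightarrow> 'a \<Rightarrow> bool) \<Rightarrow> nat \<Rightarrow> ('a \<Rightarrow> nat) \<Rightarrow> bool" where
  "is_coloring V E k c \<longleftrightarrow> c ` V = {1..k} \<and> (\<forall>u v. E u v \<longrightarrow> c u \<noteq> c v)"

definition color_class :: "'a set \<Rightarrow> ('a \<Rightarrow> nat) \<Rightarrow> nat \<Rightarrow> 'a set" where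
  "color_class V c i = {x \<in> V. c x = i}"

definition color_code :: "'a set \<Rightarrow> ('a \<Rightarrow> 'a \<Rightarrow> bool) \<Rightarrow> nat \<Rightarrow> ('a \<Rightarrow> nat) \<Rightarrow> 'a \<Rightarrow> nat list" where
  "color_code V E k c v = map (\<lambda>i. setdist V E v (color_class V c i)) [1..<Suc k]"

definition locating_coloring :: "'a set \<Rightarrow> ('a \<Rightarrow> 'a \<Rightarrow> bool) \<Rightarrow> nat \<Rightarrow> ('a \<Rightarrow> nat) \<Rightarrow> bool" where
  "locating_coloring V E k c \<longleftrightarrow> is_coloring V E k c \<and> inj_on (color_code V E k c) V"

definition locating_chromatic_number :: "'a set \<Rightarrow> ('a \<Rightarrow> 'a \<Rightarrow> bool) \<Rightarrow> nat" where
  "locating_chromatic_number V E = (LEAST k. \<exists>c. locating_coloring V E k c)"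

text \<open>Corona product G \<odot> H: vertex a of G is Inl a; vertex x of the copy of H
  attached to a is Inr (a, x).\<close>
definition corona_vertices :: "'a set \<Rightarrow> 'b set \<Rightarrow> ('a + 'a \<times> 'b) set" where
  "corona_vertices V W = Inl ` V \<union> Inr ` (V \<times> W)"

fun corona_edge :: "'a set \<Rightarrow> ('a \<Rightarrow> 'a \<Rightarrow> bool) \<Rightarrow> 'b set \<Rightarrow> ('b \<Rightarrow> 'b \<Rightarrow> bool)
    \<Rightarrow> ('a + 'a \<times> 'b) \<Rightarrow> ('a + 'a \<times> 'b) \<Rightarrow> bool" where
  "corona_edge V E W F (Inl u) (Inl v) = E u v"
| "corona_edge V E W F (Inr (a, x)) (Inr (b, y)) = (a = b \<and> a \<in> V \<and> F x y)"
| "corona_edge V E W F (Inl u) (Inr (a, x)) = (u = a \<and> u \<in> V \<and> x \<in> W)"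
| "corona_edge V E W F (Inr (a, x)) (Inl u) = (u = a \<and> u \<in> V \<and> x \<in> W)"

definition empty_graph_vertices :: "nat \<Rightarrow> nat set" where
  "empty_graph_vertices m = {..<m}"

definition no_edges :: "nat \<Rightarrow> nat \<Rightarrow> bool" where
  "no_edges x y = False"

end

theory Submission
  imports Defs
begin

lemma walk_single: "is_walk V E [x] \<longleftrightarrow> x \<in> V"
  by (auto simp: is_walk_def)

lemma walk_cons2: "is_walk V E (x#y#zs) \<longleftrightarrow> x \<in> V \<and> E x y \<and> is_walk V E (y#zs)"
proof
  assume a: "is_walk V E (x#y#zs)"
  show "x \<in> V \<and> E x y \<and> is_walk V E (y#zs)"
  proof (intro conjI)
    show "x \<in> V" using a by (auto simp: is_walk_def)
    have "Suc 0 < length (x#y#zs)" by simp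
    with a have "E ((x#y#zs) ! 0) ((x#y#zs) ! Suc 0)" unfolding is_walk_def by blast
    then show "E x y" by simp
    show "is_walk V E (y#zs)" unfolding is_walk_def
    proof (intro conjI allI impI)
      fix i assume "Suc i < length (y#zs)"
      hence "Suc (Suc i) < length (x#y#zs)" by simp
      with a have "E ((x#y#zs) ! Suc i) ((x#y#zs) ! Suc (Suc i))" unfolding is_walk_def by blast
      thus "E ((y#zs) ! i) ((y#zs) ! Suc i)" by simp
    qed (use a in \<open>auto simp: is_walk_def\<close>)
  qed
next
  assume a: "x \<in> V \<and> E x y \<and> is_walk V E (y#zs)"
  show "is_walk V E (x#y#zs)" unfolding is_walk_def
  proof (intro conjI allI impI)
    fix i assume i: "Suc i < length (x#y#zs)"
    show "E ((x#y#zs) ! i) ((x#y#zs) ! Suc i)"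
    proof (cases i)
      case 0 then show ?thesis using a by simp
    next
      case (Suc j)
      with i have "Suc j < length (y#zs)" by simp
      with a have "E ((y#zs) ! j) ((y#zs) ! Suc j)" unfolding is_walk_def by blast
      thus ?thesis using Suc by simp
    qed
  qed (use a in \<open>auto simp: is_walk_def\<close>)
qed

lemma walk_append:
  "is_walk V E xs \<Longrightarrow> is_walk V E ys \<Longrightarrow> last xs = hd ys \<Longrightarrow>
   is_walk V E (xs @ tl ys) \<and> hd (xs @ tl ys) = hd xs \<and> last (xs @ tl ys) = last ys"
proof (induction xs rule: induct_list012)
  case 1 then show ?case by (simp add: is_walk_def)
next
  case (2 x)
  have "ys \<noteq> []" using "2.prems" by (simp add: is_walk_def)
  then have "[x] @ tl ys = ys" using "2.prems" by (cases ys) simp_all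
  then show ?case using "2.prems" by simp
next
  case (3 x y zs)
  have w: "is_walk V E (y#zs)" and x: "x \<in> V" "E x y" using "3.prems"(1) by (simp_all only: walk_cons2)
  have l: "last (y#zs) = hd ys" using "3.prems"(3) by simp
  have IH: "is_walk V E ((y#zs) @ tl ys) \<and> hd ((y#zs) @ tl ys) = hd (y#zs) \<and> last ((y#zs) @ tl ys) = last ys"
    using "3.IH"(2)[OF w "3.prems"(2) l] .
  have e: "(x#y#zs) @ tl ys = x # ((y#zs) @ tl ys)" by simp
  have "is_walk V E (x # ((y#zs) @ tl ys))" using IH x by (simp add: walk_cons2)
  moreover have "last ((x#y#zs) @ tl ys) = last ((y#zs) @ tl ys)" by simp
  ultimately show ?case using IH by simp
qed

definition reach where "reach V E u v = (\<exists>xs. is_walk V E xs \<and> hd xs = u \<and> last xs = v)"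

lemma reach_trans: "reach V E u v \<Longrightarrow> reach V E v w \<Longrightarrow> reach V E u w"
proof -
  assume "reach V E u v" "reach V E v w"
  then obtain xs ys where "is_walk V E xs" "hd xs = u" "last xs = v" "is_walk V E ys" "hd ys = v" "last ys = w"
    unfolding reach_def by blast
  with walk_append[of V E xs ys] show ?thesis unfolding reach_def by metis
qed

lemma reach_edge: "u \<in> V \<Longrightarrow> v \<in> V \<Longrightarrow> E u v \<Longrightarrow> reach V E u v"
  unfolding reach_def by (rule exI[of _ "[u,v]"]) (simp add: walk_cons2 walk_single)

lemma reach_refl: "u \<in> V \<Longrightarrow> reach V E u u"
  unfolding reach_def by (rule exI[of _ "[u]"]) (simp add: walk_single)

lemma gdist_attained:
  assumes "reach V E u w"
  shows "\<exists>xs. is_walk V E xs \<and> hd xs = u \<and> last xs = w \<and> length xs = Suc (gdist V E u w)"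
proof -
  obtain xs where xs: "is_walk V E xs" "hd xs = u" "last xs = w" using assms reach_def by metis
  hence "length xs = Suc (length xs - 1)" by (cases xs) (auto simp: is_walk_def)
  with xs have "\<exists>k. \<exists>xs. is_walk V E xs \<and> hd xs = u \<and> last xs = w \<and> length xs = Suc k" by blast
  from LeastI_ex[OF this] show ?thesis unfolding gdist_def .
qed

lemma gdist_le: "is_walk V E xs \<Longrightarrow> hd xs = u \<Longrightarrow> last xs = w \<Longrightarrow> length xs = Suc k \<Longrightarrow> gdist V E u w \<le> k"
  unfolding gdist_def by (rule Least_le) blast

lemma gdist_0_iff:
  assumes "reach V E u w" "u \<in> V"
  shows "gdist V E u w = 0 \<longleftrightarrow> u = w"
proof
  assume "gdist V E u w = 0"
  with gdist_attained[OF assms(1)] obtain xs where "hd xs = u" "last xs = w" "length xs = 1" by auto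
  thus "u = w" by (cases xs) auto
next
  assume "u = w"
  thus "gdist V E u w = 0" using gdist_le[of V E "[u]" u w 0] assms by (simp add: walk_single)
qed

lemma gdist_1_iff:
  assumes "reach V E u w" "u \<in> V" "w \<in> V" "\<And>x. \<not> E x x"
  shows "gdist V E u w = 1 \<longleftrightarrow> E u w"
proof
  assume "gdist V E u w = 1"
  with gdist_attained[OF assms(1)] obtain xs where xs: "is_walk V E xs" "hd xs = u" "last xs = w" "length xs = 2" by auto
  then obtain a b where "xs = [a,b]" by (cases xs; cases "tl xs") auto
  thus "E u w" using xs by (simp add: walk_cons2)
next
  assume e: "E u w"
  hence "u \<noteq> w" using assms(4) by blast
  hence "gdist V E u w \<noteq> 0" using gdist_0_iff[OF assms(1,2)] by simp
  moreover have "gdist V E u w \<le> 1" using gdist_le[of V E "[u,w]" u w 1] assms e by (simp add: walk_cons2 walk_single)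
  ultimately show "gdist V E u w = 1" by simp
qed

lemma walk_map:
  assumes "is_walk V E xs" "\<forall>x\<in>V. \<sigma> x \<in> V" "\<forall>u v. E u v \<longrightarrow> E (\<sigma> u) (\<sigma> v)"
  shows "is_walk V E (map \<sigma> xs)"
  using assms unfolding is_walk_def by auto

lemma gdist_auto:
  assumes "\<forall>x\<in>V. \<sigma> x \<in> V" "\<forall>u v. E u v \<longrightarrow> E (\<sigma> u) (\<sigma> v)" "\<forall>x. \<sigma> (\<sigma> x) = x"
  shows "gdist V E (\<sigma> u) (\<sigma> w) = gdist V E u w"
proof -
  let ?P = "\<lambda>a b k. \<exists>xs. is_walk V E xs \<and> hd xs = a \<and> last xs = b \<and> length xs = Suc k"
  have A: "?P (\<sigma> a) (\<sigma> b) k" if "?P a b k" for a b k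
  proof -
    from that obtain xs where xs: "is_walk V E xs" "hd xs = a" "last xs = b" "length xs = Suc k" by blast
    hence "xs \<noteq> []" by auto
    thus ?thesis using xs walk_map[OF xs(1) assms(1,2)] by (intro exI[of _ "map \<sigma> xs"]) (auto simp: hd_map last_map)
  qed
  have "?P (\<sigma> u) (\<sigma> w) = ?P u w"
  proof
    fix k show "?P (\<sigma> u) (\<sigma> w) k = ?P u w k"
      using A[of u w k] A[of "\<sigma> u" "\<sigma> w" k] assms(3) by auto
  qed
  thus ?thesis unfolding gdist_def by simp
qed

lemma Min_eq_iff_nat: "finite (A::nat set) \<Longrightarrow> A \<noteq> {} \<Longrightarrow> Min A = k \<longleftrightarrow> k \<in> A \<and> (\<forall>a\<in>A. k \<le> a)"
  by (metis Min_eq_iff)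


definition col :: "('a \<Rightarrow> nat) \<Rightarrow> ('a + 'a \<times> nat) \<Rightarrow> nat" where
  "col f p = (case p of Inl a \<Rightarrow> f a | Inr (a,x) \<Rightarrow> if x+1 < f a then x+1 else x+2)"

lemma col_Inl[simp]: "col f (Inl a) = f a" by (simp add: col_def)
lemma col_Inr[simp]: "col f (Inr (a,x)) = (if x+1 < f a then x+1 else x+2)" by (simp add: col_def)

context
  fixes V :: "'a set" and E :: "'a \<Rightarrow> 'a \<Rightarrow> bool" and m :: nat
  assumes tree: "is_tree V E"
begin

abbreviation "CV \<equiv> corona_vertices V (empty_graph_vertices m)"
abbreviation "CE \<equiv> corona_edge V E (empty_graph_vertices m) no_edges"

lemma sg: "simple_graph V E" using tree by (simp add: is_tree_def)

lemma finV: "finite V" using sg by (simp add: simple_graph_def)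

lemma finCV: "finite CV"
  using finV by (simp add: corona_vertices_def empty_graph_vertices_def)

lemma CE_irrefl: "\<not> CE p p"
proof (cases p)
  case (Inl a) then show ?thesis using sg by (simp add: simple_graph_def)
next
  case (Inr b) then show ?thesis by (cases b) (simp add: no_edges_def)
qed

lemma leaf_nbr1: "CE (Inr (b,z)) q \<Longrightarrow> q = Inl b"
  by (cases q) (auto simp: no_edges_def)

lemma leaf_nbr2: "CE q (Inr (b,z)) \<Longrightarrow> q = Inl b"
  by (cases q) (auto simp: no_edges_def)

lemma leaf_edge: "b \<in> V \<Longrightarrow> z < m \<Longrightarrow> CE (Inr (b,z)) (Inl b) \<and> CE (Inl b) (Inr (b,z))"
  by (simp add: empty_graph_vertices_def)

lemma Inl_in: "a \<in> V \<Longrightarrow> Inl a \<in> CV" by (simp add: corona_vertices_def)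
lemma Inr_in: "a \<in> V \<Longrightarrow> x < m \<Longrightarrow> Inr (a,x) \<in> CV"
  by (simp add: corona_vertices_def empty_graph_vertices_def)

lemma CV_cases: "p \<in> CV \<Longrightarrow> (\<And>a. p = Inl a \<Longrightarrow> a \<in> V \<Longrightarrow> P) \<Longrightarrow> (\<And>a x. p = Inr (a,x) \<Longrightarrow> a \<in> V \<Longrightarrow> x < m \<Longrightarrow> P) \<Longrightarrow> P"
  by (auto simp: corona_vertices_def empty_graph_vertices_def)

lemma tree_reach:
  assumes "a \<in> V" "b \<in> V" shows "reach CV CE (Inl a) (Inl b)"
proof -
  from tree assms obtain xs where xs: "is_walk V E xs" "hd xs = a" "last xs = b"
    unfolding is_tree_def connected_graph_def by blast
  have "is_walk CV CE (map Inl xs)"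
    unfolding is_walk_def
  proof (intro conjI allI impI)
    show "map Inl xs \<noteq> []" using xs(1) by (simp add: is_walk_def)
    show "set (map Inl xs) \<subseteq> CV" using xs(1) by (auto simp: is_walk_def corona_vertices_def)
    fix i assume "Suc i < length (map Inl xs)"
    then show "CE (map Inl xs ! i) (map Inl xs ! Suc i)" using xs(1) by (simp add: is_walk_def)
  qed
  moreover have "xs \<noteq> []" using xs(1) by (simp add: is_walk_def)
  ultimately show ?thesis unfolding reach_def using xs
    by (intro exI[of _ "map Inl xs"]) (simp add: hd_map last_map)
qed

lemma anchor: "p \<in> CV \<Longrightarrow> \<exists>a\<in>V. reach CV CE p (Inl a) \<and> reach CV CE (Inl a) p"
proof (erule CV_cases)
  fix a assume h: "p = Inl a" "a \<in> V"
  have "reach CV CE p p" using reach_refl[of p CV CE] Inl_in[OF h(2)] h(1) by simp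
  then show ?thesis using h by blast
next
  fix a x assume h: "p = Inr (a,x)" "a \<in> V" "x < m"
  have e: "CE p (Inl a)" "CE (Inl a) p" using leaf_edge[OF h(2,3)] h(1) by simp_all
  have i: "p \<in> CV" "Inl a \<in> CV" using Inr_in[OF h(2,3)] Inl_in[OF h(2)] h(1) by simp_all
  have "reach CV CE p (Inl a)" "reach CV CE (Inl a) p"
    using reach_edge[of p CV "Inl a" CE, OF i e(1)] reach_edge[of "Inl a" CV p CE, OF i(2,1) e(2)] by simp_all
  then show ?thesis using h(2) by blast
qed

lemma reach_all: "p \<in> CV \<Longrightarrow> q \<in> CV \<Longrightarrow> reach CV CE p q"
proof -
  assume p: "p \<in> CV" and q: "q \<in> CV"
  obtain a where a: "a \<in> V" "reach CV CE p (Inl a)" using anchor[OF p] by blast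
  obtain b where b: "b \<in> V" "reach CV CE (Inl b) q" using anchor[OF q] by blast
  show ?thesis using reach_trans[OF reach_trans[OF a(2) tree_reach[OF a(1) b(1)]] b(2)] .
qed

lemma setdist0:
  assumes "p \<in> CV" "C \<subseteq> CV" "C \<noteq> {}"
  shows "setdist CV CE p C = 0 \<longleftrightarrow> p \<in> C"
proof -
  have fin: "finite C" using finite_subset[OF assms(2) finCV] .
  have g0: "gdist CV CE p w = 0 \<longleftrightarrow> p = w" if "w \<in> C" for w
    using gdist_0_iff[OF reach_all[OF assms(1) subsetD[OF assms(2) that]] assms(1)] .
  have "setdist CV CE p C = 0 \<longleftrightarrow> 0 \<in> gdist CV CE p ` C"
    unfolding setdist_def using Min_eq_iff_nat[of "gdist CV CE p ` C" 0] fin assms(3) by simp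
  also have "\<dots> \<longleftrightarrow> p \<in> C" using g0 by force
  finally show ?thesis .
qed

lemma setdist1:
  assumes "p \<in> CV" "C \<subseteq> CV" "C \<noteq> {}"
  shows "setdist CV CE p C = 1 \<longleftrightarrow> p \<notin> C \<and> (\<exists>w\<in>C. CE p w)"
proof -
  have fin: "finite C" using finite_subset[OF assms(2) finCV] .
  have g0: "gdist CV CE p w = 0 \<longleftrightarrow> p = w" if "w \<in> C" for w
    using gdist_0_iff[OF reach_all[OF assms(1) subsetD[OF assms(2) that]] assms(1)] .
  have g1: "gdist CV CE p w = 1 \<longleftrightarrow> CE p w" if "w \<in> C" for w
    using gdist_1_iff[OF reach_all[OF assms(1) subsetD[OF assms(2) that]] assms(1) subsetD[OF assms(2) that] CE_irrefl] .
  have "setdist CV CE p C = 1 \<longleftrightarrow> 1 \<in> gdist CV CE p ` C \<and> (\<forall>a\<in>gdist CV CE p ` C. 1 \<le> a)"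
    unfolding setdist_def using Min_eq_iff_nat[of "gdist CV CE p ` C" 1] fin assms(3) by simp
  also have "\<dots> \<longleftrightarrow> (\<exists>w\<in>C. CE p w) \<and> p \<notin> C"
  proof -
    have "(\<forall>a\<in>gdist CV CE p ` C. 1 \<le> a) \<longleftrightarrow> (\<forall>w\<in>C. gdist CV CE p w \<noteq> 0)" by auto
    also have "\<dots> \<longleftrightarrow> p \<notin> C" using g0 by blast
    moreover have "1 \<in> gdist CV CE p ` C \<longleftrightarrow> (\<exists>w\<in>C. CE p w)"
    proof
      assume "1 \<in> gdist CV CE p ` C"
      then obtain w where "w \<in> C" "gdist CV CE p w = 1" by auto
      then show "\<exists>w\<in>C. CE p w" using g1 by auto
    next
      assume "\<exists>w\<in>C. CE p w"
      then obtain w where "w \<in> C" "CE p w" by auto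
      then show "1 \<in> gdist CV CE p ` C" using g1 by force
    qed
    ultimately show ?thesis by simp
  qed
  finally show ?thesis by blast
qed


lemma swap_edge:
  assumes a: "a \<in> V" "x < m" "y < m"
  defines "\<sigma> \<equiv> \<lambda>p. if p = Inr (a,x) then Inr (a,y) else if p = Inr (a,y) then Inr (a,x) else p"
  shows "\<forall>u v. CE u v \<longrightarrow> CE (\<sigma> u) (\<sigma> v)"
proof (intro allI impI)
  fix u v assume e: "CE u v"
  have ea: "CE (Inr (a,z)) (Inl a)" "CE (Inl a) (Inr (a,z))" if "z < m" for z
    using leaf_edge[OF a(1) that] by simp_all
  show "CE (\<sigma> u) (\<sigma> v)"
  proof (cases "u = Inr (a,x) \<or> u = Inr (a,y)")
    case True
    then have "v = Inl a" using e leaf_nbr1 by blast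
    then show ?thesis using True ea a unfolding \<sigma>_def by auto
  next
    case F1: False
    show ?thesis
    proof (cases "v = Inr (a,x) \<or> v = Inr (a,y)")
      case True
      then have "u = Inl a" using e leaf_nbr2 by blast
      then show ?thesis using True ea a unfolding \<sigma>_def by auto
    next
      case False
      then show ?thesis using F1 e unfolding \<sigma>_def by simp
    qed
  qed
qed

lemma lower:
  assumes loc: "locating_coloring CV CE k c" and a: "a \<in> V"
  shows "m + 1 \<le> k"
proof -
  have col: "c ` CV = {1..k}" and prp: "\<And>u v. CE u v \<Longrightarrow> c u \<noteq> c v"
    and inj: "inj_on (color_code CV CE k c) CV"
    using loc by (auto simp: locating_coloring_def is_coloring_def)
  have leafinj: "c (Inr (a,x)) \<noteq> c (Inr (a,y))" if xy: "x < m" "y < m" "x \<noteq> y" for x y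
  proof
    assume eq: "c (Inr (a,x)) = c (Inr (a,y))"
    define \<sigma> where "\<sigma> \<equiv> \<lambda>p. if p = Inr (a,x) then Inr (a,y) else if p = Inr (a,y) then Inr (a,x) else (p::'a + 'a \<times> nat)"
    have inv: "\<forall>p. \<sigma> (\<sigma> p) = p" by (simp add: \<sigma>_def)
    have l1: "Inr (a,x) \<in> CV" and l2: "Inr (a,y) \<in> CV" using Inr_in a xy by auto
    have mapV: "\<forall>p\<in>CV. \<sigma> p \<in> CV" using l1 l2 by (simp add: \<sigma>_def)
    have edge: "\<forall>u v. CE u v \<longrightarrow> CE (\<sigma> u) (\<sigma> v)" using swap_edge[OF a xy(1,2)] unfolding \<sigma>_def .
    have csig: "c (\<sigma> p) = c p" for p using eq by (simp add: \<sigma>_def)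
    have gd: "gdist CV CE (Inr (a,x)) w = gdist CV CE (Inr (a,y)) (\<sigma> w)" for w
      using gdist_auto[OF mapV edge inv, of "Inr (a,x)" w] by (simp add: \<sigma>_def)
    have Cimg: "\<sigma> ` color_class CV c i = color_class CV c i" for i
    proof
      show "\<sigma> ` color_class CV c i \<subseteq> color_class CV c i"
        using mapV csig by (auto simp: color_class_def)
      show "color_class CV c i \<subseteq> \<sigma> ` color_class CV c i"
      proof
        fix p assume p: "p \<in> color_class CV c i"
        then have "\<sigma> p \<in> color_class CV c i" using mapV csig by (auto simp: color_class_def)
        then show "p \<in> \<sigma> ` color_class CV c i" using inv by (metis image_eqI)
      qed
    qed
    have "gdist CV CE (Inr (a,x)) ` color_class CV c i = gdist CV CE (Inr (a,y)) ` color_class CV c i" for i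
    proof -
      have "gdist CV CE (Inr (a,x)) ` color_class CV c i = (\<lambda>w. gdist CV CE (Inr (a,y)) (\<sigma> w)) ` color_class CV c i"
        using gd by simp
      also have "\<dots> = gdist CV CE (Inr (a,y)) ` (\<sigma> ` color_class CV c i)" by (simp add: image_image)
      finally show ?thesis using Cimg by simp
    qed
    then have "color_code CV CE k c (Inr (a,x)) = color_code CV CE k c (Inr (a,y))"
      unfolding color_code_def setdist_def by simp
    then have "Inr (a,x) = (Inr (a,y) :: 'a + 'a \<times> nat)" using inj_onD[OF inj _ l1 l2] by blast
    then show False using xy by simp
  qed
  have adj: "c (Inl a) \<noteq> c (Inr (a,x))" if "x < m" for x
    using prp leaf_edge[OF a that] by blast
  let ?g = "\<lambda>x. c (Inr (a,x))"
  have injg: "inj_on ?g {..<m}" using leafinj by (auto simp: inj_on_def)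
  have S: "insert (c (Inl a)) (?g ` {..<m}) \<subseteq> {1..k}"
    using col Inl_in[OF a] Inr_in[OF a] by blast
  have "card (insert (c (Inl a)) (?g ` {..<m})) = m + 1"
    using adj injg by (subst card_insert_disjoint) (auto simp: card_image)
  moreover have "card (insert (c (Inl a)) (?g ` {..<m})) \<le> card {1..k}"
    using S by (intro card_mono) auto
  ultimately show ?thesis by simp
qed

lemma leafcol:
  assumes "1 \<le> f a" "f a \<le> m + 1" "1 \<le> i" "i \<le> m + 1" "i \<noteq> f a"
  shows "\<exists>x<m. col f (Inr (a,x)) = i"
proof (cases "i < f a")
  case True
  then show ?thesis using assms by (intro exI[of _ "i - 1"]) auto
next
  case False
  then show ?thesis using assms by (intro exI[of _ "i - 2"]) auto
qed

lemma upper: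
  assumes f: "inj_on f V" and fr: "\<forall>a\<in>V. 1 \<le> f a \<and> f a \<le> m + 1" and ne: "V \<noteq> {}" and m2: "m \<ge> 2"
  shows "locating_coloring CV CE (m+1) (col f)"
proof -
  obtain a0 where a0: "a0 \<in> V" using ne by blast
  have colrange: "col f p \<in> {1..m+1}" if "p \<in> CV" for p
    using that
  proof (rule CV_cases)
    fix a assume "p = Inl a" "a \<in> V" then show ?thesis using fr by auto
  next
    fix a x assume "p = Inr (a,x)" "a \<in> V" "x < m" then show ?thesis using fr by auto
  qed
  have surj: "col f ` CV = {1..m+1}"
  proof
    show "col f ` CV \<subseteq> {1..m+1}" using colrange by blast
    show "{1..m+1} \<subseteq> col f ` CV"
    proof
      fix i assume i: "i \<in> {1..m+1}"
      show "i \<in> col f ` CV"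
      proof (cases "i = f a0")
        case True
        then show ?thesis using Inl_in[OF a0] by force
      next
        case False
        then obtain x where "x < m" "col f (Inr (a0,x)) = i" using leafcol[of f a0 i] fr a0 i by auto
        then show ?thesis using Inr_in[OF a0] by force
      qed
    qed
  qed
  have leafne: "col f (Inr (a,x)) \<noteq> f a" for a x by simp
  have proper: "col f u \<noteq> col f v" if e: "CE u v" for u v
  proof (cases u)
    case (Inl b)
    show ?thesis
    proof (cases v)
      case (Inl b')
      then have "E b b'" using e \<open>u = Inl b\<close> by simp
      then have "b \<in> V" "b' \<in> V" "b \<noteq> b'" using sg unfolding simple_graph_def by blast+
      then show ?thesis using f Inl \<open>u = Inl b\<close> by (auto dest: inj_onD)
    next
      case (Inr q)
      then obtain a x where "v = Inr (a,x)" by (cases q) auto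
      then show ?thesis using leaf_nbr2[of u a x] e Inl by (metis col_Inl leafne)
    qed
  next
    case (Inr q)
    then obtain a x where ux: "u = Inr (a,x)" by (cases q) auto
    then have "v = Inl a" using leaf_nbr1 e by blast
    then show ?thesis using ux leafne by (metis col_Inl)
  qed
  define cc where "cc i = color_class CV (col f) i" for i
  have ccsub: "cc i \<subseteq> CV" for i by (auto simp: cc_def color_class_def)
  have ccne: "cc i \<noteq> {}" if "i \<in> {1..m+1}" for i
  proof -
    have "i \<in> col f ` CV" using that surj by simp
    then obtain p where "p \<in> CV" "col f p = i" by (auto simp del: corona_vertices_def)
    then have "p \<in> cc i" by (simp add: cc_def color_class_def)
    then show ?thesis by blast
  qed
  have sd0: "setdist CV CE p (cc i) = 0 \<longleftrightarrow> col f p = i" if "p \<in> CV" "i \<in> {1..m+1}" for p i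
    using setdist0[OF that(1) ccsub ccne[OF that(2)]] that(1) by (simp add: cc_def color_class_def)
  have sd1: "setdist CV CE p (cc i) = 1 \<longleftrightarrow> col f p \<noteq> i \<and> (\<exists>w\<in>CV. col f w = i \<and> CE p w)"
    if "p \<in> CV" "i \<in> {1..m+1}" for p i
    using setdist1[OF that(1) ccsub ccne[OF that(2)]] that(1) by (auto simp: cc_def color_class_def)
  have treeval: "setdist CV CE (Inl a) (cc i) \<le> 1" if a: "a \<in> V" and i: "i \<in> {1..m+1}" for a i
  proof (cases "i = f a")
    case True then show ?thesis using sd0[OF Inl_in[OF a] i] by simp
  next
    case False
    then obtain x where x: "x < m" "col f (Inr (a,x)) = i" using leafcol[of f a i] fr a i by auto
    have w: "\<exists>w\<in>CV. col f w = i \<and> CE (Inl a) w"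
      using Inr_in[OF a x(1)] leaf_edge[OF a x(1)] x(2) by blast
    have "col f (Inl a) \<noteq> i" using False by simp
    then have "setdist CV CE (Inl a) (cc i) = 1"
      using sd1[OF Inl_in[OF a] i] w by blast
    then show ?thesis by simp
  qed
  have leafval: "\<exists>i\<in>{1..m+1}. setdist CV CE (Inr (a,x)) (cc i) > 1" if a: "a \<in> V" and x: "x < m" for a x
  proof -
    obtain i where i: "i \<in> {1,2,3::nat}" "i \<noteq> col f (Inr (a,x))" "i \<noteq> f a"
    proof -
      have "\<exists>i\<in>{1,2,3::nat}. i \<noteq> col f (Inr (a,x)) \<and> i \<noteq> f a" by auto
      then show ?thesis using that by blast
    qed
    have im: "i \<in> {1..m+1}" using i(1) m2 by auto
    have n0: "setdist CV CE (Inr (a,x)) (cc i) \<noteq> 0" using sd0[OF Inr_in[OF a x] im] i by simp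
    have n1: "setdist CV CE (Inr (a,x)) (cc i) \<noteq> 1"
    proof
      assume "setdist CV CE (Inr (a,x)) (cc i) = 1"
      then obtain w where "col f w = i" "CE (Inr (a,x)) w" using sd1[OF Inr_in[OF a x] im] by blast
      then show False using leaf_nbr1 i(3) by fastforce
    qed
    show ?thesis using n0 n1 im by (intro bexI[of _ i]) auto
  qed
  have inj: "inj_on (color_code CV CE (m+1) (col f)) CV"
  proof (rule inj_onI)
    fix p q assume p: "p \<in> CV" and q: "q \<in> CV"
      and eq: "color_code CV CE (m+1) (col f) p = color_code CV CE (m+1) (col f) q"
    have sdeq: "setdist CV CE p (cc i) = setdist CV CE q (cc i)" if "i \<in> {1..m+1}" for i
    proof -
      have "\<forall>i\<in>set [1..<Suc (m+1)]. setdist CV CE p (color_class CV (col f) i) = setdist CV CE q (color_class CV (col f) i)"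
        using eq unfolding color_code_def map_eq_conv by blast
      moreover have "i \<in> set [1..<Suc (m+1)]" using that m2 by auto
      ultimately show ?thesis unfolding cc_def by blast
    qed
    show "p = q"
    proof (rule CV_cases[OF p])
      fix a assume pa: "p = Inl a" "a \<in> V"
      show "p = q"
      proof (rule CV_cases[OF q])
        fix b assume qb: "q = Inl b" "b \<in> V"
        have fa: "f a \<in> {1..m+1}" using fr pa(2) by auto
        have "setdist CV CE q (cc (f a)) = 0" using sdeq[OF fa] sd0[OF p fa] pa by simp
        then have "f b = f a" using sd0[OF q fa] qb by simp
        then show "p = q" using f pa qb by (auto dest: inj_onD)
      next
        fix b y assume qb: "q = Inr (b,y)" "b \<in> V" "y < m"
        obtain i where "i \<in> {1..m+1}" "setdist CV CE q (cc i) > 1" using leafval[OF qb(2,3)] qb(1) by blast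
        then show "p = q" using sdeq treeval[OF pa(2)] pa(1) by fastforce
      qed
    next
      fix a x assume pa: "p = Inr (a,x)" "a \<in> V" "x < m"
      obtain i where i: "i \<in> {1..m+1}" "setdist CV CE p (cc i) > 1" using leafval[OF pa(2,3)] pa(1) by blast
      show "p = q"
      proof (rule CV_cases[OF q])
        fix b assume qb: "q = Inl b" "b \<in> V"
        then show "p = q" using sdeq[OF i(1)] i(2) treeval[OF qb(2) i(1)] by simp
      next
        fix b y assume qb: "q = Inr (b,y)" "b \<in> V" "y < m"
        have cp: "col f p \<in> {1..m+1}" using colrange[OF p] .
        have "setdist CV CE q (cc (col f p)) = 0" using sdeq[OF cp] sd0[OF p cp] by simp
        then have cq: "col f q = col f p" using sd0[OF q cp] by simp
        have fa: "f a \<in> {1..m+1}" using fr pa(2) by auto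
        have w: "\<exists>w\<in>CV. col f w = f a \<and> CE p w"
        proof (rule bexI[of _ "Inl a"])
          show "col f (Inl a) = f a \<and> CE p (Inl a)" using pa(1) leaf_edge[OF pa(2,3)] by simp
        qed (rule Inl_in[OF pa(2)])
        have "col f p \<noteq> f a" using pa(1) leafne by simp
        then have "setdist CV CE p (cc (f a)) = 1"
          using sd1[OF p fa] w by blast
        then have "setdist CV CE q (cc (f a)) = 1" using sdeq[OF fa] by simp
        then obtain w where "col f w = f a" "CE q w" using sd1[OF q fa] by blast
        then have "f b = f a" using leaf_nbr1 qb(1) by fastforce
        then have ab: "a = b" using f pa(2) qb(2) by (auto dest: inj_onD)
        then have "col f (Inr (a,x)) = col f (Inr (a,y))" using cq pa qb by simp
        then have "x = y" by (auto split: if_splits)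
        then show "p = q" using pa qb ab by simp
      qed
    qed
  qed
  show ?thesis unfolding locating_coloring_def is_coloring_def using surj proper inj by blast
qed
end

theorem theorem6:
  fixes V :: "'a set" and E :: "'a \<Rightarrow> 'a \<Rightarrow> bool" and m n :: nat
  assumes "m \<ge> 2" and "2 \<le> n" and "n \<le> m + 1"
    and "is_tree V E" and "card V = n"
  shows "locating_chromatic_number
           (corona_vertices V (empty_graph_vertices m))
           (corona_edge V E (empty_graph_vertices m) no_edges) = m + 1"
  unfolding locating_chromatic_number_def
proof (rule Least_equality)
  have fin: "finite V" using finV[OF assms(4)] .
  have ne: "V \<noteq> {}" using assms(2,5) by auto
  obtain h where h: "bij_betw h V {0..<card V}" using ex_bij_betw_finite_nat[OF fin] by blast
  define f where "f a = Suc (h a)" for a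
  have injf: "inj_on f V" using bij_betw_imp_inj_on[OF h] unfolding f_def inj_on_def by simp
  have fr: "\<forall>a\<in>V. 1 \<le> f a \<and> f a \<le> m + 1"
  proof
    fix a assume "a \<in> V"
    then have "h a < card V" using bij_betwE[OF h] by auto
    then show "1 \<le> f a \<and> f a \<le> m + 1" using assms(3,5) unfolding f_def by simp
  qed
  show "\<exists>c. locating_coloring (corona_vertices V (empty_graph_vertices m))
           (corona_edge V E (empty_graph_vertices m) no_edges) (m + 1) c"
    using upper[OF assms(4) injf fr ne assms(1)] by blast
next
  fix k assume "\<exists>c. locating_coloring (corona_vertices V (empty_graph_vertices m))
           (corona_edge V E (empty_graph_vertices m) no_edges) k c"
  then obtain c where c: "locating_coloring (corona_vertices V (empty_graph_vertices m))
           (corona_edge V E (empty_graph_vertices m) no_edges) k c" by blast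
  obtain a where "a \<in> V" using assms(2,5) by (metis card.empty ex_in_conv not_numeral_le_zero)
  then show "m + 1 \<le> k" using lower[OF assms(4) c] by blast
qed

end
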